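(* Fix $\theta\in(-\frac{\pi}{2},\frac{\pi}{2})$ and let $P_t^{\theta}$, $t\ge 0$, be the complex Ornstein-Uhlenbeck semigroup defined below. Then for every $t\ge0$ and every $\phi\in C_b(\mathbb{R}^2)$, $$P_t^{\theta}(P_t^{\theta})^*\phi=(P_t^{\theta})^*P_t^{\theta}\phi,$$ where $(P_t^{\theta})^*$ is the adjoint of $P_t^{\theta}$ in $L^2(\gamma)$. Furthermore, when restricted to $C_b(\mathbb{R}^2)$, $(P_t^{\theta})^*=P_t^{-\theta}$.
   Context: Identify $\mathbb{R}^2$ with $\mathbb{C}$ via $(y_1,y_2)\mapsto y_1+\mathrm{i}y_2$. Let $\gamma$ be the standard Gaussian measure $d\gamma(y)=\frac{1}{2\pi}e^{-(y_1^2+y_2^2)/2}\,dy_1\,dy_2$, and $L^2(\gamma)$ the complex Hilbert space with inner product $\langle f,g\rangle=\int f\bar g\,d\gamma$. $C_b(\mathbb{R}^2)$ is the space of bounded continuous complex-valued functions on $\mathbb{R}^2$. For $\varphi\in C_b(\mathbb{R}^2)$, $t\ge0$ and $x\in\mathbb{C}$, $$P_t^{\theta}\varphi(x)=\int_{\mathbb{C}}\varphi\big(e^{-(\cos\theta+\mathrm{i}\sin\theta)t}x+\sqrt{1-e^{-2t\cos\theta}}\,y\big)\,d\gamma(y)$$ (the transition semigroup of the complex Ornstein-Uhlenbeck process $dZ_t=-e^{\mathrm{i}\theta}Z_t\,dt+\sqrt{2\cos\theta}\,d\zeta_t$, $\zeta$ a complex Brownian motion). $P_t^\theta$ is a contraction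 in $L^2(\gamma)$ norm on $C_b(\mathbb{R}^2)$ and extends uniquely to a bounded operator on $L^2(\gamma)$, whose adjoint is $(P_t^\theta)^*$. *)

theory Defs
  imports "HOL-Analysis.Analysis"
begin

definition gauss :: "complex measure" where
  "gauss = density lborel (\<lambda>y. ennreal (exp (- (cmod y)\<^sup>2 / 2) / (2 * pi)))"

definition Cb :: "(complex \<Rightarrow> complex) set" where
  "Cb = {\<phi>. continuous_on UNIV \<phi> \<and> bounded (range \<phi>)}"

definition L2g :: "(complex \<Rightarrow> complex) set" where
  "L2g = {f. f \<in> borel_measurable gauss \<and> integrable gauss (\<lambda>x. (cmod (f x))\<^sup>2)}"

definition inner_g :: "(complex \<Rightarrow> complex) \<Rightarrow> (complex \<Rightarrow> complex) \<Rightarrow> complex" where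
  "inner_g f g = (\<integral>x. f x * cnj (g x) \<partial>gauss)"

definition OU :: "real \<Rightarrow> real \<Rightarrow> (complex \<Rightarrow> complex) \<Rightarrow> complex \<Rightarrow> complex" where
  "OU \<theta> t \<phi> x = (\<integral>y. \<phi> (exp (- (cis \<theta> * complex_of_real t)) * x
        + complex_of_real (sqrt (1 - exp (- 2 * t * cos \<theta>))) * y) \<partial>gauss)"

text \<open>The L^2(gamma)-adjoint of OU theta t applied to phi: the (a.e.-unique, since C_b is
  dense in L^2(gamma) and OU theta t is bounded) element g of L^2(gamma) with
  <OU theta t psi, phi> = <psi, g> for all psi in C_b.\<close>
definition OU_adj :: "real \<Rightarrow> real \<Rightarrow> (complex \<Rightarrow> complex) \<Rightarrow> complex \<Rightarrow> complex" where
  "OU_adj \<theta> t \<phi> = (SOME g. g \<in> L2g \<and>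
      (\<forall>\<psi>\<in>Cb. inner_g (OU \<theta> t \<psi>) \<phi> = inner_g \<psi> g))"

end

theory Submission
  imports Defs "HOL-Probability.Probability"
begin

lemma Complex_meas[measurable]: "(\<lambda>(a::real,b::real). Complex a b) \<in> (lborel \<Otimes>\<^sub>M lborel) \<rightarrow>\<^sub>M borel"
  unfolding case_prod_beta' Complex_eq by measurable

lemma lborel_complex:
  "distr (lborel \<Otimes>\<^sub>M lborel) borel (\<lambda>(a::real,b::real). Complex a b) = lborel"
proof (rule lborel_eqI[symmetric])
  fix l u :: complex
  assume le: "\<And>b. b \<in> Basis \<Longrightarrow> l \<bullet> b \<le> u \<bullet> b"
  have "(\<lambda>(a,b). Complex a b) -` box l u \<inter> space (lborel \<Otimes>\<^sub>M lborel) = {Re l<..<Re u} \<times> {Im l<..<Im u}"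
    by (auto simp: box_def Basis_complex_def space_pair_measure)
  moreover have "Re l \<le> Re u" "Im l \<le> Im u" using le[of 1] le[of \<i>] by (auto simp: Basis_complex_def)
  ultimately show "emeasure (distr (lborel \<Otimes>\<^sub>M lborel) borel (\<lambda>(a,b). Complex a b)) (box l u) = (\<Prod>b\<in>Basis. (u - l) \<bullet> b)"
    by (simp add: emeasure_distr lborel.emeasure_pair_measure_Times Basis_complex_def ennreal_mult)
qed simp

definition gd :: "complex \<Rightarrow> real" where "gd y = exp (- (cmod y)\<^sup>2 / 2) / (2 * pi)"

lemma gd_pos: "gd y > 0" by (simp add: gd_def)
lemma gd_meas[measurable]: "gd \<in> borel_measurable borel" unfolding gd_def by measurable

lemma gauss_def': "gauss = density lborel (\<lambda>y. ennreal (gd y))"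
  by (simp add: gauss_def gd_def)

lemma sets_gauss[simp, measurable_cong]: "sets gauss = sets borel"
  by (simp add: gauss_def)
lemma space_gauss[simp]: "space gauss = UNIV"
  by (simp add: gauss_def)

lemma gd_Complex: "gd (Complex a b) = std_normal_density a * std_normal_density b"
proof -
  have "(cmod (Complex a b))\<^sup>2 = a\<^sup>2 + b\<^sup>2" by (simp add: cmod_power2)
  moreover have "(1 / sqrt (2 * pi)) * (1 / sqrt (2 * pi)) = 1 / (2 * pi)"
    using pi_gt_zero by simp
  ultimately show ?thesis
    unfolding gd_def std_normal_density_def
    by (simp add: field_simps exp_add[symmetric] exp_diff)
qed

lemma nn_std: "(\<integral>\<^sup>+ x. ennreal (std_normal_density x) \<partial>lborel) = 1"
  by (simp add: nn_integral_eq_integral normal_density_nonneg)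

lemma prob_space_gauss: "prob_space gauss"
proof
  have "emeasure gauss (space gauss) = (\<integral>\<^sup>+ z. ennreal (gd z) \<partial>lborel)"
    by (simp add: gauss_def' emeasure_density)
  also have "\<dots> = (\<integral>\<^sup>+ z. ennreal (gd z) \<partial>distr (lborel \<Otimes>\<^sub>M lborel) borel (\<lambda>(a::real,b::real). Complex a b))"
    by (simp add: lborel_complex)
  also have "\<dots> = (\<integral>\<^sup>+ p. ennreal (gd (case p of (a,b) \<Rightarrow> Complex a b)) \<partial>(lborel \<Otimes>\<^sub>M lborel))"
    by (subst nn_integral_distr) auto
  also have "\<dots> = (\<integral>\<^sup>+ a. \<integral>\<^sup>+ b. ennreal (std_normal_density a) * ennreal (std_normal_density b) \<partial>lborel \<partial>lborel)"
    by (subst lborel.nn_integral_fst[symmetric]) (auto simp: gd_Complex ennreal_mult normal_density_nonneg)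
  also have "\<dots> = 1"
    by (simp add: nn_integral_cmult nn_std)
  finally show "emeasure gauss (space gauss) = 1" .
qed

interpretation gauss: prob_space gauss by (rule prob_space_gauss)

abbreviation LL :: "(complex \<times> complex) measure" where "LL \<equiv> lborel \<Otimes>\<^sub>M lborel"

definition lin :: "complex \<Rightarrow> complex \<Rightarrow> complex \<Rightarrow> complex \<Rightarrow> complex \<times> complex \<Rightarrow> complex \<times> complex" where
  "lin p q r s z = (p * fst z + q * snd z, r * fst z + s * snd z)"

lemma lin_meas[measurable]: "lin p q r s \<in> LL \<rightarrow>\<^sub>M LL"
  unfolding lin_def by measurable

lemma lin_comp: "lin p q r s \<circ> lin p' q' r' s' = lin (p * p' + q * r') (p * q' + q * s') (r * p' + s * r') (r * q' + s * s')"
  by (auto simp: lin_def fun_eq_iff algebra_simps)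

lemma sets_LL[simp]: "sets LL = sets borel"
  by (simp add: borel_prod[symmetric])

lemma nn_shearU:
  assumes [measurable]: "f \<in> borel_measurable LL"
  shows "(\<integral>\<^sup>+ z. f (lin 1 k 0 1 z) \<partial>LL) = (\<integral>\<^sup>+ z. f z \<partial>LL)"
proof -
  have "(\<integral>\<^sup>+ z. f (lin 1 k 0 1 z) \<partial>LL) = (\<integral>\<^sup>+ y. \<integral>\<^sup>+ x. f (x + k * y, y) \<partial>lborel \<partial>lborel)"
    using measurable_compose[OF lin_meas assms, of 1 k 0 1] by (subst lborel_pair.nn_integral_snd[symmetric]) (auto simp: lin_def)
  also have "\<dots> = (\<integral>\<^sup>+ y. \<integral>\<^sup>+ x. f (x, y) \<partial>lborel \<partial>lborel)"
  proof (rule nn_integral_cong)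
    fix y :: complex
    have "(\<integral>\<^sup>+ x. f (x, y) \<partial>lborel) = (\<integral>\<^sup>+ x. f (x, y) \<partial>distr lborel borel ((+) (k * y)))"
      by (simp add: lborel_distr_plus)
    also have "\<dots> = (\<integral>\<^sup>+ x. f (k * y + x, y) \<partial>lborel)"
      by (subst nn_integral_distr) auto
    finally show "(\<integral>\<^sup>+ x. f (x + k * y, y) \<partial>lborel) = (\<integral>\<^sup>+ x. f (x, y) \<partial>lborel)"
      by (simp add: add.commute)
  qed
  also have "\<dots> = (\<integral>\<^sup>+ z. f z \<partial>LL)"
    by (subst lborel_pair.nn_integral_snd[symmetric]) auto
  finally show ?thesis .
qed

lemma nn_shearL:
  assumes [measurable]: "f \<in> borel_measurable LL"
  shows "(\<integral>\<^sup>+ z. f (lin 1 0 k 1 z) \<partial>LL) = (\<integral>\<^sup>+ z. f z \<partial>LL)"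
proof -
  have "(\<integral>\<^sup>+ z. f (lin 1 0 k 1 z) \<partial>LL) = (\<integral>\<^sup>+ x. \<integral>\<^sup>+ y. f (x, k * x + y) \<partial>lborel \<partial>lborel)"
    using measurable_compose[OF lin_meas assms, of 1 0 k 1] by (subst lborel.nn_integral_fst[symmetric]) (auto simp: lin_def)
  also have "\<dots> = (\<integral>\<^sup>+ x. \<integral>\<^sup>+ y. f (x, y) \<partial>lborel \<partial>lborel)"
  proof (rule nn_integral_cong)
    fix x :: complex
    have "(\<integral>\<^sup>+ y. f (x, y) \<partial>lborel) = (\<integral>\<^sup>+ y. f (x, y) \<partial>distr lborel borel ((+) (k * x)))"
      by (simp add: lborel_distr_plus)
    also have "\<dots> = (\<integral>\<^sup>+ y. f (x, k * x + y) \<partial>lborel)"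
      by (subst nn_integral_distr) auto
    finally show "(\<integral>\<^sup>+ y. f (x, k * x + y) \<partial>lborel) = (\<integral>\<^sup>+ y. f (x, y) \<partial>lborel)"
      by simp
  qed
  also have "\<dots> = (\<integral>\<^sup>+ z. f z \<partial>LL)"
    by (subst lborel.nn_integral_fst[symmetric]) auto
  finally show ?thesis .
qed

lemma distr_from_nn:
  assumes [measurable]: "T \<in> LL \<rightarrow>\<^sub>M LL"
  assumes nn: "\<And>f. f \<in> borel_measurable LL \<Longrightarrow> (\<integral>\<^sup>+ z. f (T z) \<partial>LL) = (\<integral>\<^sup>+ z. f z \<partial>LL)"
  shows "distr LL LL T = LL"
proof (rule measure_eqI)
  fix A assume A: "A \<in> sets (distr LL LL T)"
  then have AL[measurable]: "A \<in> sets LL" by simp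
  have "emeasure (distr LL LL T) A = (\<integral>\<^sup>+ z. indicator A z \<partial>distr LL LL T)"
    by (rule nn_integral_indicator[symmetric]) (use A in simp)
  also have "\<dots> = (\<integral>\<^sup>+ z. indicator A (T z) \<partial>LL)"
    by (subst nn_integral_distr) auto
  also have "\<dots> = (\<integral>\<^sup>+ z. indicator A z \<partial>LL)"
    by (rule nn) measurable
  finally show "emeasure (distr LL LL T) A = emeasure LL A"
    using nn_integral_indicator[OF AL] by simp
qed simp

definition SLP where "SLP p q r s \<longleftrightarrow> distr LL LL (lin p q r s) = LL"

lemma SLP_U: "SLP 1 k 0 1"
  unfolding SLP_def by (rule distr_from_nn) (auto intro: nn_shearU)
lemma SLP_L: "SLP 1 0 k 1"
  unfolding SLP_def by (rule distr_from_nn) (auto intro: nn_shearL)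

lemma SLP_mult:
  assumes "SLP p q r s" "SLP p' q' r' s'"
  shows "SLP (p * p' + q * r') (p * q' + q * s') (r * p' + s * r') (r * q' + s * s')"
proof -
  have "distr LL LL (lin p q r s \<circ> lin p' q' r' s') = distr (distr LL LL (lin p' q' r' s')) LL (lin p q r s)"
    by (subst distr_distr) auto
  also have "\<dots> = LL" using assms by (simp add: SLP_def)
  finally show ?thesis by (simp add: SLP_def lin_comp)
qed

lemma SLP_mult_eq:
  assumes "SLP p q r s" "SLP p' q' r' s'"
    and "P = p * p' + q * r'" "Q = p * q' + q * s'" "R = r * p' + s * r'" "S = r * q' + s * s'"
  shows "SLP P Q R S"
  using SLP_mult[OF assms(1,2)] assms(3-6) by simp

lemma SLP_diag:
  assumes p: "p \<noteq> 0"
  shows "SLP p 0 0 (1 / p)"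
proof -
  have M1: "SLP 0 p (-1/p) 1"
    by (rule SLP_mult_eq[OF SLP_U[of p] SLP_L[of "-1/p"]]) (use p in auto)
  have M2: "SLP 0 p (-1/p) 0"
    by (rule SLP_mult_eq[OF M1 SLP_U[of p]]) (use p in auto)
  have N1: "SLP 0 (-1) 1 1"
    by (rule SLP_mult_eq[OF SLP_U[of "-1"] SLP_L[of 1]]) auto
  have N2: "SLP 0 (-1) 1 0"
    by (rule SLP_mult_eq[OF N1 SLP_U[of "-1"]]) auto
  show ?thesis
    by (rule SLP_mult_eq[OF M2 N2]) (use p in auto)
qed

lemma SLP_nz:
  assumes p: "p \<noteq> 0" and det: "p * s - q * r = 1"
  shows "SLP p q r s"
proof -
  have A: "SLP p q 0 (1/p)"
    by (rule SLP_mult_eq[OF SLP_diag[OF p] SLP_U[of "q/p"]]) (use p in auto)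
  have s: "s = (1 + q * r) / p" using det p by (simp add: field_simps)
  show ?thesis
    by (rule SLP_mult_eq[OF SLP_L[of "r/p"] A]) (use p s in \<open>auto simp: field_simps\<close>)
qed

lemma SLP_det:
  assumes det: "p * s - q * r = 1"
  shows "SLP p q r s"
proof (cases "p = 0")
  case False then show ?thesis using SLP_nz det by blast
next
  case True
  then have "r \<noteq> 0" using det by auto
  then have A: "SLP (p - r) (q - s) r s"
    by (intro SLP_nz) (use True det in \<open>auto simp: algebra_simps\<close>)
  show ?thesis
    by (rule SLP_mult_eq[OF SLP_U[of 1] A]) auto
qed

abbreviation GG :: "(complex \<times> complex) measure" where "GG \<equiv> gauss \<Otimes>\<^sub>M gauss"

definition gg :: "complex \<times> complex \<Rightarrow> ennreal" where
  "gg z = ennreal (exp (- ((cmod (fst z))\<^sup>2 + (cmod (snd z))\<^sup>2) / 2) / (2 * pi)\<^sup>2)"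

lemma gg_meas_borel: "gg \<in> borel_measurable borel"
proof -
  have h[measurable]: "(\<lambda>z::complex\<times>complex. exp (- ((cmod (fst z))\<^sup>2 + (cmod (snd z))\<^sup>2) / 2) / (2 * pi)\<^sup>2) \<in> borel_measurable borel"
    by (rule borel_measurable_continuous_onI) (intro continuous_intros; simp)
  show ?thesis unfolding gg_def by measurable
qed

lemma gg_meas[measurable]: "gg \<in> borel_measurable LL"
  by (subst measurable_cong_sets[OF sets_LL refl]) (rule gg_meas_borel)

lemma GG_density: "GG = density LL gg"
proof -
  have "GG = density LL (\<lambda>(x,y). ennreal (gd x) * ennreal (gd y))"
    unfolding gauss_def'
    by (rule pair_measure_density) (auto intro: sigma_finite_lborel prob_space_imp_sigma_finite prob_space_gauss[unfolded gauss_def'])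
  also have "(\<lambda>(x,y). ennreal (gd x) * ennreal (gd y)) = gg"
    by (auto simp: fun_eq_iff gg_def gd_def ennreal_mult[symmetric] exp_add[symmetric] power2_eq_square
          diff_divide_distrib add_divide_distrib)
  finally show ?thesis .
qed

lemma sets_GG[simp]: "sets GG = sets borel"
  by (simp add: borel_prod[symmetric])

lemma norm_pres:
  fixes a b x y :: complex
  shows "(cmod (a * x + (- cnj b) * y))\<^sup>2 + (cmod (b * x + cnj a * y))\<^sup>2
     = ((cmod a)\<^sup>2 + (cmod b)\<^sup>2) * ((cmod x)\<^sup>2 + (cmod y)\<^sup>2)"
  unfolding cmod_power2 by (simp add: power2_eq_square algebra_simps)

lemma GG_inv:
  assumes ab: "(cmod a)\<^sup>2 + (cmod b)\<^sup>2 = 1"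
  shows "distr GG GG (lin a (- cnj b) b (cnj a)) = GG"
proof -
  let ?R = "lin a (- cnj b) b (cnj a)"
  have det: "a * cnj a - (- cnj b) * b = 1"
  proof -
    have "a * cnj a - (- cnj b) * b = complex_of_real ((cmod a)\<^sup>2 + (cmod b)\<^sup>2)"
      by (simp add: complex_mult_cnj cmod_power2 mult.commute)
    then show ?thesis using ab by simp
  qed
  have S: "distr LL LL ?R = LL" using SLP_det[OF det] by (simp add: SLP_def)
  have ggR: "gg (?R z) = gg z" for z
    using norm_pres[of a "fst z" b "snd z"] ab by (simp add: gg_def lin_def)
  have Rm[measurable]: "?R \<in> GG \<rightarrow>\<^sub>M GG"
    using lin_meas by (simp cong: measurable_cong_sets)
  show ?thesis
  proof (rule measure_eqI)
    fix A assume "A \<in> sets (distr GG GG ?R)"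
    then have AL[measurable]: "A \<in> sets LL" by simp
    have "emeasure (distr GG GG ?R) A = (\<integral>\<^sup>+ z. indicator A z \<partial>distr GG GG ?R)"
      by (rule nn_integral_indicator[symmetric]) (use AL in simp)
    also have "\<dots> = (\<integral>\<^sup>+ z. indicator A (?R z) \<partial>GG)"
      by (subst nn_integral_distr) auto
    also have "\<dots> = (\<integral>\<^sup>+ z. gg z * indicator A (?R z) \<partial>LL)"
      unfolding GG_density by (subst nn_integral_density) auto
    also have "\<dots> = (\<integral>\<^sup>+ z. gg (?R z) * indicator A (?R z) \<partial>LL)"
      by (simp add: ggR)
    also have "\<dots> = (\<integral>\<^sup>+ w. gg w * indicator A w \<partial>distr LL LL ?R)"
      by (subst nn_integral_distr) auto
    also have "\<dots> = (\<integral>\<^sup>+ w. gg w * indicator A w \<partial>LL)"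
      by (simp add: S)
    also have "\<dots> = emeasure GG A"
      unfolding GG_density using AL by (subst emeasure_density) (auto simp: mult.commute borel_prod)
    finally show "emeasure (distr GG GG ?R) A = emeasure GG A" .
  qed simp
qed

interpretation GGp: pair_prob_space gauss gauss
  by (simp add: pair_prob_space_def pair_sigma_finite_def prob_space_gauss prob_space_imp_sigma_finite)

lemma GG_inv_integral:
  fixes F :: "complex \<times> complex \<Rightarrow> complex"
  assumes ab: "(cmod a)\<^sup>2 + (cmod b)\<^sup>2 = 1" and F[measurable]: "F \<in> borel_measurable GG"
  shows "(\<integral>z. F (lin a (- cnj b) b (cnj a) z) \<partial>GG) = (\<integral>z. F z \<partial>GG)"
proof -
  have Rm[measurable]: "lin a (- cnj b) b (cnj a) \<in> GG \<rightarrow>\<^sub>M GG"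
    using lin_meas by (simp cong: measurable_cong_sets)
  have "(\<integral>z. F z \<partial>GG) = (\<integral>z. F z \<partial>distr GG GG (lin a (- cnj b) b (cnj a)))"
    by (simp add: GG_inv[OF ab])
  also have "\<dots> = (\<integral>z. F (lin a (- cnj b) b (cnj a) z) \<partial>GG)"
    by (rule integral_distr) auto
  finally show ?thesis by simp
qed

lemma GG_swap_integral:
  fixes F :: "complex \<times> complex \<Rightarrow> complex"
  assumes F[measurable]: "F \<in> borel_measurable GG"
  shows "(\<integral>z. F (snd z, fst z) \<partial>GG) = (\<integral>z. F z \<partial>GG)"
proof -
  have "(\<integral>z. F z \<partial>GG) = (\<integral>z. F z \<partial>distr GG GG (\<lambda>(x, y). (y, x)))"
    using GGp.distr_pair_swap by simp
  also have "\<dots> = (\<integral>z. F (case z of (x, y) \<Rightarrow> (y, x)) \<partial>GG)"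
    by (rule integral_distr) auto
  finally show ?thesis by (simp add: case_prod_beta')
qed

definition BM :: "(complex \<Rightarrow> complex) \<Rightarrow> bool" where
  "BM f \<longleftrightarrow> f \<in> borel_measurable borel \<and> (\<exists>B. \<forall>x. cmod (f x) \<le> B)"

definition Q :: "complex \<Rightarrow> real \<Rightarrow> (complex \<Rightarrow> complex) \<Rightarrow> complex \<Rightarrow> complex" where
  "Q a c f x = (\<integral>y. f (a * x + complex_of_real c * y) \<partial>gauss)"

lemma Q_meas:
  assumes f[measurable]: "f \<in> borel_measurable borel"
  shows "Q a c f \<in> borel_measurable borel"
proof -
  have "(\<lambda>x. \<integral>y. f (a * x + complex_of_real c * y) \<partial>gauss) \<in> borel_measurable borel"
    by measurable
  then show ?thesis by (simp add: Q_def[abs_def])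
qed

lemma Q_bound:
  assumes f: "\<And>x. cmod (f x) \<le> B"
  shows "cmod (Q a c f x) \<le> B"
proof -
  have "cmod (Q a c f x) \<le> (\<integral>y. cmod (f (a * x + complex_of_real c * y)) \<partial>gauss)"
    unfolding Q_def by (rule integral_norm_bound)
  also have "\<dots> \<le> (\<integral>y. B \<partial>gauss)"
  proof (cases "integrable gauss (\<lambda>y. cmod (f (a * x + complex_of_real c * y)))")
    case True then show ?thesis by (intro integral_mono) (auto simp: f)
  next
    case False
    have B0: "0 \<le> B" using f[of 0] norm_ge_zero order_trans by blast
    have "gauss.prob UNIV = 1" using gauss.prob_space by simp
    with False B0 show ?thesis by (simp add: not_integrable_integral_eq)
  qed
  also have "\<dots> = B" using gauss.prob_space by simp
  finally show ?thesis .
qed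

lemma BM_Q: "BM f \<Longrightarrow> BM (Q a c f)"
  unfolding BM_def using Q_meas Q_bound by blast

lemma W_alg:
  fixes a :: complex
  defines "n \<equiv> 1 + a * cnj a"
  defines "al \<equiv> (1 + a\<^sup>2) / n" and "be \<equiv> (a - cnj a) / n"
  shows "cnj a * al + be = a" "cnj al - cnj a * cnj be = 1" "(cmod al)\<^sup>2 + (cmod be)\<^sup>2 = 1"
proof -
  have nr: "n = complex_of_real (1 + (cmod a)\<^sup>2)"
    unfolding n_def complex_norm_square[symmetric] by simp
  have n0: "n \<noteq> 0" unfolding nr
    by (metis of_real_eq_0_iff add_pos_nonneg zero_less_one zero_le_power2 less_irrefl)
  have cn: "cnj n = n" unfolding nr by simp
  have num: "cnj a * (1 + a\<^sup>2) + (a - cnj a) = a * n"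
    by (simp add: n_def algebra_simps power2_eq_square)
  have "cnj a * al + be = (cnj a * (1 + a\<^sup>2) + (a - cnj a)) / n"
    using n0 by (simp add: al_def be_def field_simps)
  also have "\<dots> = a" using n0 by (simp add: num)
  finally show "cnj a * al + be = a" .
  have ca: "cnj al = (1 + (cnj a)\<^sup>2) / n" using cn by (simp add: al_def)
  have cb: "cnj be = (cnj a - a) / n" using cn by (simp add: be_def)
  have num2: "(1 + (cnj a)\<^sup>2) - cnj a * (cnj a - a) = n"
    by (simp add: n_def algebra_simps power2_eq_square)
  have "cnj al - cnj a * cnj be = ((1 + (cnj a)\<^sup>2) - cnj a * (cnj a - a)) / n"
    using n0 by (simp add: ca cb field_simps)
  then show "cnj al - cnj a * cnj be = 1" using n0 by (simp add: num2)
  have num3: "(1 + a\<^sup>2) * (1 + (cnj a)\<^sup>2) + (a - cnj a) * (cnj a - a) = n * n"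
    by (simp add: n_def algebra_simps power2_eq_square)
  have "complex_of_real ((cmod al)\<^sup>2 + (cmod be)\<^sup>2) = al * cnj al + be * cnj be"
    unfolding of_real_add complex_norm_square ..
  also have "\<dots> = ((1 + a\<^sup>2) * (1 + (cnj a)\<^sup>2) + (a - cnj a) * (cnj a - a)) / (n * n)"
    using n0 by (simp add: ca cb al_def be_def cn field_simps)
  also have "\<dots> = 1" using n0 by (simp add: num3)
  finally show "(cmod al)\<^sup>2 + (cmod be)\<^sup>2 = 1"
    by (metis of_real_eq_1_iff)
qed

lemma cnj_meas[measurable]: "cnj \<in> borel_measurable borel"
  by (intro borel_measurable_continuous_onI continuous_intros)

lemma BM_bound_pos:
  assumes "BM f" obtains B where "B \<ge> 0" "\<And>x. cmod (f x) \<le> B"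
proof -
  obtain B where B: "\<And>x. cmod (f x) \<le> B" using assms by (auto simp: BM_def)
  then have "B \<ge> 0" using norm_ge_zero order_trans by blast
  with B show ?thesis using that by blast
qed

lemma BM_meas: "BM f \<Longrightarrow> f \<in> borel_measurable borel"
  by (simp add: BM_def)

lemma adj:
  assumes psi: "BM \<psi>" and phi: "BM \<phi>" and ac: "(cmod a)\<^sup>2 + c\<^sup>2 = 1"
  shows "inner_g (Q a c \<psi>) \<phi> = inner_g \<psi> (Q (cnj a) c \<phi>)"
proof -
  obtain B1 where B1: "B1 \<ge> 0" "\<And>x. cmod (\<psi> x) \<le> B1" using BM_bound_pos[OF psi] by blast
  obtain B2 where B2: "B2 \<ge> 0" "\<And>x. cmod (\<phi> x) \<le> B2" using BM_bound_pos[OF phi] by blast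
  have [measurable]: "\<psi> \<in> borel_measurable borel" "\<phi> \<in> borel_measurable borel"
    using psi phi by (auto simp: BM_def)
  define F1 where "F1 z = \<psi> (a * fst z + complex_of_real c * snd z) * cnj (\<phi> (fst z))" for z
  define F2 where "F2 z = \<psi> (fst z) * cnj (\<phi> (cnj a * fst z + complex_of_real c * snd z))" for z
  have F1m[measurable]: "F1 \<in> borel_measurable GG" unfolding F1_def by measurable
  have F2m[measurable]: "F2 \<in> borel_measurable GG" unfolding F2_def by measurable
  have bnd: "cmod (\<psi> u * cnj (\<phi> v)) \<le> B1 * B2" for u v
    unfolding norm_mult complex_mod_cnj by (intro mult_mono B1 B2) auto
  have i1: "integrable GG F1"
    by (rule GGp.integrable_const_bound[where B="B1*B2"]) (auto simp: F1_def bnd)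
  have i2: "integrable GG F2"
    by (rule GGp.integrable_const_bound[where B="B1*B2"]) (auto simp: F2_def bnd)
  have L: "inner_g (Q a c \<psi>) \<phi> = integral\<^sup>L GG F1"
    unfolding inner_g_def Q_def by (simp add: GGp.integral_fst'[OF i1, symmetric] F1_def)
  have R: "inner_g \<psi> (Q (cnj a) c \<phi>) = integral\<^sup>L GG F2"
    unfolding inner_g_def Q_def by (simp add: GGp.integral_fst'[OF i2, symmetric] F2_def)
  have acC: "cnj a * a + complex_of_real c * complex_of_real c = 1"
  proof -
    have "cnj a * a + complex_of_real c * complex_of_real c = complex_of_real ((cmod a)\<^sup>2 + c\<^sup>2)"
      unfolding of_real_add complex_norm_square by (simp add: power2_eq_square mult.commute)
    then show ?thesis using ac by simp
  qed
  have e: "cnj a * (a * x + complex_of_real c * y) + complex_of_real c * (complex_of_real c * x + - cnj a * y) = x" for x y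
  proof -
    have "cnj a * (a * x + complex_of_real c * y) + complex_of_real c * (complex_of_real c * x + - cnj a * y)
      = (cnj a * a + complex_of_real c * complex_of_real c) * x"
      by (simp add: algebra_simps)
    then show ?thesis using acC by simp
  qed
  have ac': "(cmod (complex_of_real c))\<^sup>2 + (cmod a)\<^sup>2 = 1" using ac by simp
  have "integral\<^sup>L GG F2 = (\<integral>z. F2 (snd z, fst z) \<partial>GG)"
    by (rule GG_swap_integral[symmetric]) simp
  also have "\<dots> = (\<integral>z. (\<lambda>w. F2 (snd w, fst w)) (lin (complex_of_real c) (- cnj a) a (cnj (complex_of_real c)) z) \<partial>GG)"
    by (rule GG_inv_integral[OF ac', symmetric]) measurable
  also have "\<dots> = integral\<^sup>L GG F1"
  proof (rule Bochner_Integration.integral_cong[OF refl])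
    fix z :: "complex \<times> complex"
    obtain x y where z: "z = (x, y)" by (cases z)
    show "(\<lambda>w. F2 (snd w, fst w)) (lin (complex_of_real c) (- cnj a) a (cnj (complex_of_real c)) z) = F1 z"
      unfolding z F1_def F2_def lin_def fst_conv snd_conv complex_cnj_complex_of_real e ..
  qed
  finally show ?thesis using L R by simp
qed

lemma comm:
  assumes phi: "BM \<phi>"
  shows "Q a c (Q (cnj a) c \<phi>) x = Q (cnj a) c (Q a c \<phi>) x"
proof -
  obtain B2 where B2: "B2 \<ge> 0" "\<And>x. cmod (\<phi> x) \<le> B2" using BM_bound_pos[OF phi] by blast
  have [measurable]: "\<phi> \<in> borel_measurable borel"
    using phi by (auto simp: BM_def)
  define H1 where "H1 z = \<phi> (cnj a * (a * x + complex_of_real c * fst z) + complex_of_real c * snd z)" for z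
  define H2 where "H2 z = \<phi> (a * (cnj a * x + complex_of_real c * fst z) + complex_of_real c * snd z)" for z
  have H1m[measurable]: "H1 \<in> borel_measurable GG" unfolding H1_def by measurable
  have H2m[measurable]: "H2 \<in> borel_measurable GG" unfolding H2_def by measurable
  have i1: "integrable GG H1"
    by (rule GGp.integrable_const_bound[where B="B2"]) (auto simp: H1_def B2)
  have i2: "integrable GG H2"
    by (rule GGp.integrable_const_bound[where B="B2"]) (auto simp: H2_def B2)
  have L: "Q a c (Q (cnj a) c \<phi>) x = integral\<^sup>L GG H1"
    unfolding Q_def by (simp add: GGp.integral_fst'[OF i1, symmetric] H1_def)
  have R: "Q (cnj a) c (Q a c \<phi>) x = integral\<^sup>L GG H2"
    unfolding Q_def by (simp add: GGp.integral_fst'[OF i2, symmetric] H2_def)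
  define n where "n = 1 + a * cnj a"
  define al where "al = (1 + a\<^sup>2) / n"
  define be where "be = (a - cnj a) / n"
  have e1: "cnj a * al + be = a" and e2: "cnj al - cnj a * cnj be = 1" and e3: "(cmod al)\<^sup>2 + (cmod be)\<^sup>2 = 1"
    using W_alg[of a] unfolding n_def al_def be_def by auto
  have "integral\<^sup>L GG H1 = (\<integral>z. H1 (lin al (- cnj be) be (cnj al) z) \<partial>GG)"
    by (rule GG_inv_integral[OF e3, symmetric]) measurable
  also have "\<dots> = integral\<^sup>L GG H2"
  proof (rule Bochner_Integration.integral_cong[OF refl])
    fix z :: "complex \<times> complex"
    obtain y y' where z: "z = (y, y')" by (cases z)
    have "cnj a * (a * x + complex_of_real c * (al * y + - cnj be * y')) + complex_of_real c * (be * y + cnj al * y')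
       = cnj a * a * x + complex_of_real c * ((cnj a * al + be) * y + (cnj al - cnj a * cnj be) * y')"
      by (simp add: algebra_simps)
    also have "\<dots> = a * (cnj a * x + complex_of_real c * y) + complex_of_real c * y'"
      unfolding e1 e2 by (simp add: algebra_simps)
    finally show "H1 (lin al (- cnj be) be (cnj al) z) = H2 z"
      unfolding z H1_def H2_def lin_def fst_conv snd_conv by simp
  qed
  finally show ?thesis using L R by simp
qed

lemma Q_AE:
  assumes c: "c \<noteq> 0" and g[measurable]: "g \<in> borel_measurable borel"
    and h[measurable]: "h \<in> borel_measurable borel" and ae: "AE z in gauss. g z = h z"
  shows "Q a c g x = Q a c h x"
proof -
  have ae1: "AE z in lborel. g z = h z"
    using ae unfolding gauss_def' by (subst (asm) AE_density) (auto simp: gd_pos)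
  have eq: "lborel = density (distr lborel borel (\<lambda>y. a * x + c *\<^sub>R y)) (\<lambda>_. ennreal (\<bar>c\<bar> ^ DIM(complex)))"
    by (rule lborel_affine[OF c])
  have "AE z in density (distr lborel borel (\<lambda>y. a * x + c *\<^sub>R y)) (\<lambda>_. ennreal (\<bar>c\<bar> ^ DIM(complex))). g z = h z"
    using ae1 by (subst (asm) eq)
  then have "AE z in distr lborel borel (\<lambda>y. a * x + c *\<^sub>R y). g z = h z"
    by (subst (asm) AE_density) (auto simp: c)
  then have ae2: "AE y in lborel. g (a * x + c *\<^sub>R y) = h (a * x + c *\<^sub>R y)"
    by (subst (asm) AE_distr_iff) auto
  have "AE y in gauss. g (a * x + complex_of_real c * y) = h (a * x + complex_of_real c * y)"
    unfolding gauss_def' using ae2 by (subst AE_density) (auto simp: scaleR_conv_of_real elim!: eventually_mono)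
  then show ?thesis unfolding Q_def by (intro integral_cong_AE) auto
qed

lemma meas_gauss_borel: "f \<in> borel_measurable gauss \<longleftrightarrow> f \<in> borel_measurable borel"
  by (subst measurable_cong_sets[OF sets_gauss refl]) (rule refl)

lemma L2g_meas: "g \<in> L2g \<Longrightarrow> g \<in> borel_measurable borel"
  by (simp add: L2g_def meas_gauss_borel)

lemma L2g_int: assumes g: "g \<in> L2g" shows "integrable gauss g"
proof -
  have [measurable]: "g \<in> borel_measurable borel" using L2g_meas[OF g] .
  have i: "integrable gauss (\<lambda>x. 1 + (cmod (g x))\<^sup>2)"
    using g by (auto simp: L2g_def)
  show ?thesis
  proof (rule Bochner_Integration.integrable_bound[OF i])
    show "g \<in> borel_measurable gauss" by (simp add: meas_gauss_borel)
    have "cmod (g x) \<le> norm (1 + (cmod (g x))\<^sup>2)" for x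
    proof -
      have h: "0 \<le> (cmod (g x) - 1)\<^sup>2" by simp
      have "cmod (g x) \<le> 1 + (cmod (g x))\<^sup>2"
        using h norm_ge_zero[of "g x"] unfolding power2_eq_square left_diff_distrib right_diff_distrib by linarith
      then show ?thesis by simp
    qed
    then show "AE x in gauss. norm (g x) \<le> norm (1 + (cmod (g x))\<^sup>2)" by simp
  qed
qed

lemma BM_L2g: assumes f: "BM f" shows "f \<in> L2g"
proof -
  obtain B where B: "B \<ge> 0" "\<And>x. cmod (f x) \<le> B" using BM_bound_pos[OF f] by blast
  have [measurable]: "f \<in> borel_measurable borel" using f by (simp add: BM_def)
  have "integrable gauss (\<lambda>x. (cmod (f x))\<^sup>2)"
  proof (rule gauss.integrable_const_bound[where B="B\<^sup>2"])
    show "AE x in gauss. norm ((cmod (f x))\<^sup>2) \<le> B\<^sup>2"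
      using B by (auto intro!: power_mono)
  qed (simp add: meas_gauss_borel)
  then show ?thesis by (simp add: L2g_def meas_gauss_borel)
qed

lemma Cb_BM: assumes "\<psi> \<in> Cb" shows "BM \<psi>"
proof -
  have c: "continuous_on UNIV \<psi>" and b: "bounded (range \<psi>)" using assms by (auto simp: Cb_def)
  then show ?thesis unfolding BM_def bounded_iff
    using borel_measurable_continuous_onI[OF c] by auto
qed

lemma int_bdd_mult:
  assumes g: "integrable gauss g" and psi: "BM \<psi>"
  shows "integrable gauss (\<lambda>x. \<psi> x * cnj (g x))"
proof -
  obtain B where B: "B \<ge> 0" "\<And>x. cmod (\<psi> x) \<le> B" using BM_bound_pos[OF psi] by blast
  have [measurable]: "\<psi> \<in> borel_measurable borel" using psi by (simp add: BM_def)
  have gm[measurable]: "g \<in> borel_measurable borel"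
    using borel_measurable_integrable[OF g] by (simp add: meas_gauss_borel)
  show ?thesis
  proof (rule Bochner_Integration.integrable_bound[where f="\<lambda>x. B * cmod (g x)"])
    show "integrable gauss (\<lambda>x. B * cmod (g x))" using g by auto
    show "(\<lambda>x. \<psi> x * cnj (g x)) \<in> borel_measurable gauss" by (simp add: meas_gauss_borel)
    show "AE x in gauss. norm (\<psi> x * cnj (g x)) \<le> norm (B * cmod (g x))"
      using B by (auto simp: norm_mult intro!: mult_right_mono)
  qed
qed

lemma real_unique:
  fixes f :: "complex \<Rightarrow> real"
  assumes int: "integrable gauss f" and op: "\<And>U. open U \<Longrightarrow> (\<integral>x. f x * indicator U x \<partial>gauss) = 0"
  shows "AE x in gauss. f x = 0"
proof -
  have fm[measurable]: "f \<in> borel_measurable borel"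
    using borel_measurable_integrable[OF int] by (simp add: meas_gauss_borel)
  have em: "emeasure (density gauss (\<lambda>x. ennreal (F x))) A = ennreal (\<integral>x. max 0 (F x) * indicator A x \<partial>gauss)"
    if iF: "integrable gauss F" and A: "A \<in> sets borel" for F A
  proof -
    have [measurable]: "F \<in> borel_measurable borel"
      using borel_measurable_integrable[OF iF] by (simp add: meas_gauss_borel)
    have [measurable]: "A \<in> sets borel" using A .
    have "emeasure (density gauss (\<lambda>x. ennreal (F x))) A = (\<integral>\<^sup>+x. ennreal (F x) * indicator A x \<partial>gauss)"
      by (subst emeasure_density) auto
    also have "\<dots> = (\<integral>\<^sup>+x. ennreal (max 0 (F x) * indicator A x) \<partial>gauss)"
      by (intro nn_integral_cong) (auto split: split_indicator simp: ennreal_max_0)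
    also have "\<dots> = ennreal (\<integral>x. max 0 (F x) * indicator A x \<partial>gauss)"
      by (rule nn_integral_eq_integral) (auto intro!: integrable_real_mult_indicator iF)
    finally show ?thesis .
  qed
  have imf: "integrable gauss (\<lambda>x. - f x)" using int by simp
  define M1 where "M1 = density gauss (\<lambda>x. ennreal (f x))"
  define M2 where "M2 = density gauss (\<lambda>x. ennreal (- f x))"
  have "M1 = M2"
  proof (rule measure_eqI_generator_eq[where E="{S. open S}" and \<Omega>=UNIV and A="\<lambda>_. UNIV"])
    show "Int_stable {S :: complex set. open S}" by (auto simp: Int_stable_def)
    show "{S :: complex set. open S} \<subseteq> Pow UNIV" by auto
    show "sets M1 = sigma_sets UNIV {S. open S}" "sets M2 = sigma_sets UNIV {S. open S}"
      by (simp_all add: M1_def M2_def sets_borel)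
    show "range (\<lambda>_. UNIV) \<subseteq> {S :: complex set. open S}" "(\<Union>i::nat. UNIV) = (UNIV :: complex set)" by auto
    show "emeasure M1 UNIV \<noteq> \<infinity>" for i :: nat
      unfolding M1_def by (subst em[OF int]) auto
    fix X :: "complex set" assume "X \<in> {S. open S}"
    then have X: "open X" by simp
    then have Xb[measurable]: "X \<in> sets borel" by simp
    have i1: "integrable gauss (\<lambda>x. max 0 (f x) * indicator X x)"
      by (auto intro!: integrable_real_mult_indicator int)
    have i2: "integrable gauss (\<lambda>x. max 0 (- f x) * indicator X x)"
      by (auto intro!: integrable_real_mult_indicator imf)
    have "(\<integral>x. max 0 (f x) * indicator X x \<partial>gauss) - (\<integral>x. max 0 (- f x) * indicator X x \<partial>gauss)
        = (\<integral>x. max 0 (f x) * indicator X x - max 0 (- f x) * indicator X x \<partial>gauss)"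
      using i1 i2 by simp
    also have "\<dots> = (\<integral>x. f x * indicator X x \<partial>gauss)"
      by (intro Bochner_Integration.integral_cong) (auto split: split_indicator)
    also have "\<dots> = 0" using op[OF X] .
    finally show "emeasure M1 X = emeasure M2 X"
      unfolding M1_def M2_def by (simp add: em[OF int Xb] em[OF imf Xb])
  qed
  have le: "AE x in gauss. F x \<le> 0"
    if iF: "integrable gauss F" and eqM: "density gauss (\<lambda>x. ennreal (F x)) = density gauss (\<lambda>x. ennreal (- F x))" for F
  proof -
    have [measurable]: "F \<in> borel_measurable borel"
      using borel_measurable_integrable[OF iF] by (simp add: meas_gauss_borel)
    define A where "A = {x. 0 < F x}"
    have [measurable]: "A \<in> sets borel" unfolding A_def by measurable
    have "(\<integral>\<^sup>+x. ennreal (F x) * indicator A x \<partial>gauss) = emeasure (density gauss (\<lambda>x. ennreal (F x))) A"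
      by (subst emeasure_density) auto
    also have "\<dots> = emeasure (density gauss (\<lambda>x. ennreal (- F x))) A" by (simp add: eqM)
    also have "\<dots> = (\<integral>\<^sup>+x. ennreal (- F x) * indicator A x \<partial>gauss)"
      by (subst emeasure_density) auto
    also have "\<dots> = (\<integral>\<^sup>+x. 0 \<partial>gauss)"
      by (intro nn_integral_cong) (auto split: split_indicator simp: A_def ennreal_neg)
    finally have "(\<integral>\<^sup>+x. ennreal (F x) * indicator A x \<partial>gauss) = 0" by simp
    then have "AE x in gauss. ennreal (F x) * indicator A x = 0"
      by (subst (asm) nn_integral_0_iff_AE) (auto simp: meas_gauss_borel)
    then show ?thesis
      by (rule eventually_mono) (auto simp: A_def ennreal_eq_0_iff indicator_def split: if_splits)
  qed
  have a1: "AE x in gauss. f x \<le> 0" using le[OF int] \<open>M1 = M2\<close> by (simp add: M1_def M2_def)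
  have a2: "AE x in gauss. - f x \<le> 0" using le[OF imf] \<open>M1 = M2\<close> by (simp add: M1_def M2_def)
  from a1 a2 show ?thesis by eventually_elim simp
qed

lemma BM_indicator: "open U \<Longrightarrow> BM (\<lambda>x. complex_of_real (indicator U x))"
  unfolding BM_def by (auto intro!: exI[of _ 1] borel_open split: split_indicator)

lemma unique:
  assumes g: "g \<in> L2g" and h: "h \<in> L2g" and eq: "\<And>\<psi>. \<psi> \<in> Cb \<Longrightarrow> inner_g \<psi> g = inner_g \<psi> h"
  shows "AE x in gauss. g x = h x"
proof -
  have gi: "integrable gauss g" and hi: "integrable gauss h" using L2g_int g h by auto
  define k where "k x = g x - h x" for x
  have ki: "integrable gauss k" using gi hi by (simp add: k_def[abs_def])
  have km[measurable]: "k \<in> borel_measurable borel"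
    using borel_measurable_integrable[OF ki] by (simp add: meas_gauss_borel)
  have z: "(\<integral>x. \<psi> x * cnj (k x) \<partial>gauss) = 0" if "\<psi> \<in> Cb" for \<psi>
  proof -
    have b: "BM \<psi>" by (rule Cb_BM[OF that])
    have "(\<integral>x. \<psi> x * cnj (k x) \<partial>gauss) = (\<integral>x. \<psi> x * cnj (g x) - \<psi> x * cnj (h x) \<partial>gauss)"
      by (simp add: k_def algebra_simps)
    also have "\<dots> = inner_g \<psi> g - inner_g \<psi> h"
      unfolding inner_g_def using int_bdd_mult[OF gi b] int_bdd_mult[OF hi b] by simp
    also have "\<dots> = 0" using eq[OF that] by simp
    finally show ?thesis .
  qed
  have zU: "(\<integral>x. complex_of_real (indicator U x) * cnj (k x) \<partial>gauss) = 0" if U: "open U" for U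
  proof (cases "U = UNIV")
    case True
    have "(\<lambda>_. 1::complex) \<in> Cb" by (auto simp: Cb_def)
    from z[OF this] True show ?thesis by simp
  next
    case False
    define ps where "ps n x = complex_of_real (min 1 (real n * infdist x (- U)))" for n :: nat and x
    have psc: "continuous_on UNIV (ps n)" for n unfolding ps_def by (intro continuous_intros)
    have psb: "cmod (ps n x) \<le> 1" for n x
      unfolding ps_def using infdist_nonneg[of x "-U"] by (auto simp: min_def)
    have psCb: "ps n \<in> Cb" for n using psc psb by (auto simp: Cb_def bounded_iff)
    have psm[measurable]: "ps n \<in> borel_measurable borel" for n
      using borel_measurable_continuous_onI[OF psc] .
    have Ub[measurable]: "U \<in> sets borel" using U by simp
    have lim: "(\<lambda>n. \<integral>x. ps n x * cnj (k x) \<partial>gauss) \<longlonglongrightarrow> (\<integral>x. complex_of_real (indicator U x) * cnj (k x) \<partial>gauss)"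
    proof (rule integral_dominated_convergence[where w="\<lambda>x. cmod (k x)"])
      show "(\<lambda>x. complex_of_real (indicator U x) * cnj (k x)) \<in> borel_measurable gauss"
        by (simp add: meas_gauss_borel)
      show "(\<lambda>x. ps n x * cnj (k x)) \<in> borel_measurable gauss" for n
        by (simp add: meas_gauss_borel)
      show "integrable gauss (\<lambda>x. cmod (k x))" using ki by simp
      show "AE x in gauss. norm (ps n x * cnj (k x)) \<le> cmod (k x)" for n
        using psb by (intro AE_I2) (simp add: norm_mult mult_left_le_one_le)
      show "AE x in gauss. (\<lambda>n. ps n x * cnj (k x)) \<longlonglongrightarrow> complex_of_real (indicator U x) * cnj (k x)"
      proof (rule AE_I2)
        fix x
        show "(\<lambda>n. ps n x * cnj (k x)) \<longlonglongrightarrow> complex_of_real (indicator U x) * cnj (k x)"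
        proof (cases "x \<in> U")
          case True
          have d: "0 < infdist x (- U)"
            by (rule infdist_pos_not_in_closed) (use U False True in auto)
          obtain N :: nat where N: "1 / infdist x (-U) < N" using reals_Archimedean2 by blast
          have "eventually (\<lambda>n. ps n x * cnj (k x) = complex_of_real (indicator U x) * cnj (k x)) sequentially"
            unfolding eventually_sequentially
          proof (intro exI allI impI)
            fix n assume "N \<le> n"
            have "real N * infdist x (-U) \<le> real n * infdist x (-U)"
              using \<open>N \<le> n\<close> d by (intro mult_right_mono) auto
            moreover have "1 < real N * infdist x (-U)" using N d by (simp add: divide_less_eq)
            ultimately have "1 \<le> real n * infdist x (-U)" by linarith
            then show "ps n x * cnj (k x) = complex_of_real (indicator U x) * cnj (k x)"
              using True by (simp add: ps_def)
          qed
          then show ?thesis by (rule tendsto_eventually)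
        next
          case False
          then show ?thesis by (simp add: ps_def)
        qed
      qed
    qed
    moreover have "(\<lambda>n. \<integral>x. ps n x * cnj (k x) \<partial>gauss) = (\<lambda>n. 0)" using z[OF psCb] by simp
    ultimately show ?thesis using LIMSEQ_unique tendsto_const by metis
  qed
  have integr: "integrable gauss (\<lambda>x. complex_of_real (indicator U x) * cnj (k x))" if "open U" for U
    by (rule int_bdd_mult[OF ki BM_indicator[OF that]])
  have re: "(\<integral>x. Re (k x) * indicator U x \<partial>gauss) = 0" if "open U" for U
  proof -
    have "(\<integral>x. Re (k x) * indicator U x \<partial>gauss) = Re (\<integral>x. complex_of_real (indicator U x) * cnj (k x) \<partial>gauss)"
      by (subst integral_Re[OF integr[OF that], symmetric]) (simp add: mult.commute)
    then show ?thesis using zU[OF that] by simp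
  qed
  have im: "(\<integral>x. Im (k x) * indicator U x \<partial>gauss) = 0" if "open U" for U
  proof -
    have "(\<integral>x. Im (k x) * indicator U x \<partial>gauss) = - Im (\<integral>x. complex_of_real (indicator U x) * cnj (k x) \<partial>gauss)"
      by (subst integral_Im[OF integr[OF that], symmetric]) (simp add: mult.commute)
    then show ?thesis using zU[OF that] by simp
  qed
  have ar: "AE x in gauss. Re (k x) = 0"
    by (rule real_unique) (use ki re in auto)
  have ai: "AE x in gauss. Im (k x) = 0"
    by (rule real_unique) (use ki im in auto)
  from ar ai show ?thesis by eventually_elim (simp add: k_def complex_eq_iff)
qed

lemma measure_gauss_UNIV[simp]: "measure gauss UNIV = 1"
  using gauss.prob_space by simp

lemma part2:
  assumes OUeq: "\<And>f. OU \<theta> t f = Q a c f" and ac: "(cmod a)\<^sup>2 + c\<^sup>2 = 1" and phi: "BM \<phi>"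
  shows "OU_adj \<theta> t \<phi> \<in> L2g \<and> (AE x in gauss. OU_adj \<theta> t \<phi> x = Q (cnj a) c \<phi> x)"
proof -
  let ?P = "\<lambda>g. g \<in> L2g \<and> (\<forall>\<psi>\<in>Cb. inner_g (OU \<theta> t \<psi>) \<phi> = inner_g \<psi> g)"
  have "?P (Q (cnj a) c \<phi>)"
    using BM_L2g[OF BM_Q[OF phi]] adj[OF Cb_BM phi ac] OUeq by auto
  then have P: "?P (OU_adj \<theta> t \<phi>)" unfolding OU_adj_def by (rule someI[of ?P])
  have "AE x in gauss. OU_adj \<theta> t \<phi> x = Q (cnj a) c \<phi> x"
  proof (rule unique)
    show "OU_adj \<theta> t \<phi> \<in> L2g" using P by blast
    show "Q (cnj a) c \<phi> \<in> L2g" using BM_L2g[OF BM_Q[OF phi]] .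
    fix \<psi> assume "\<psi> \<in> Cb"
    then show "inner_g \<psi> (OU_adj \<theta> t \<phi>) = inner_g \<psi> (Q (cnj a) c \<phi>)"
      using P \<open>?P (Q (cnj a) c \<phi>)\<close> by metis
  qed
  with P show ?thesis by blast
qed

theorem proposition3p3:
  fixes \<theta> t :: real and \<phi> :: "complex \<Rightarrow> complex"
  assumes "- (pi / 2) < \<theta>" and "\<theta> < pi / 2" and "0 \<le> t" and "\<phi> \<in> Cb"
  shows "(AE x in gauss. OU \<theta> t (OU_adj \<theta> t \<phi>) x = OU_adj \<theta> t (OU \<theta> t \<phi>) x)
       \<and> (AE x in gauss. OU_adj \<theta> t \<phi> x = OU (- \<theta>) t \<phi> x)"
proof -
  have cpos: "0 < cos \<theta>" using assms(1,2) by (rule cos_gt_zero_pi)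
  define a where "a = exp (- (cis \<theta> * complex_of_real t))"
  define c where "c = sqrt (1 - exp (- 2 * t * cos \<theta>))"
  have OUeq: "OU \<theta> t f = Q a c f" for f
    by (simp add: OU_def Q_def a_def c_def fun_eq_iff)
  have OUeq': "OU (- \<theta>) t f = Q (cnj a) c f" for f
    by (simp add: OU_def Q_def a_def c_def fun_eq_iff exp_cnj cis_cnj)
  have ea: "exp (- 2 * t * cos \<theta>) \<le> 1" using cpos assms(3) by simp
  have a2: "(cmod a)\<^sup>2 = exp (- 2 * t * cos \<theta>)"
    unfolding a_def norm_exp_eq_Re by (simp add: power2_eq_square flip: exp_add)
  have ac: "(cmod a)\<^sup>2 + c\<^sup>2 = 1"
    using ea unfolding a2 c_def by simp
  have phi: "BM \<phi>" using Cb_BM[OF assms(4)] .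
  have p2: "OU_adj \<theta> t \<phi> \<in> L2g \<and> (AE x in gauss. OU_adj \<theta> t \<phi> x = Q (cnj a) c \<phi> x)"
    by (rule part2[OF OUeq ac phi])
  show ?thesis
  proof
    show "AE x in gauss. OU \<theta> t (OU_adj \<theta> t \<phi>) x = OU_adj \<theta> t (OU \<theta> t \<phi>) x"
    proof (cases "t = 0")
      case True
      have a1: "a = 1" "c = 0" using True by (simp_all add: a_def c_def)
      have id: "OU \<theta> t f = f" for f
        by (simp add: OUeq Q_def a1 fun_eq_iff)
      show ?thesis by (simp add: id)
    next
      case False
      then have tpos: "t > 0" using assms(3) by simp
      have c0: "c \<noteq> 0" unfolding c_def using tpos cpos by simp
      have q2: "OU_adj \<theta> t (Q a c \<phi>) \<in> L2g \<and> (AE x in gauss. OU_adj \<theta> t (Q a c \<phi>) x = Q (cnj a) c (Q a c \<phi>) x)"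
        by (rule part2[OF OUeq ac BM_Q[OF phi]])
      have "OU \<theta> t (OU_adj \<theta> t \<phi>) x = Q (cnj a) c (Q a c \<phi>) x" for x
      proof -
        have "OU \<theta> t (OU_adj \<theta> t \<phi>) x = Q a c (Q (cnj a) c \<phi>) x"
          unfolding OUeq
          by (rule Q_AE[OF c0 L2g_meas Q_meas[OF BM_meas[OF phi]]]) (use p2 in auto)
        also have "\<dots> = Q (cnj a) c (Q a c \<phi>) x" by (rule comm[OF phi])
        finally show ?thesis .
      qed
      with q2 show ?thesis by (auto simp: OUeq elim!: eventually_mono)
    qed
    show "AE x in gauss. OU_adj \<theta> t \<phi> x = OU (- \<theta>) t \<phi> x"
      using p2 by (simp add: OUeq')
  qed
qed

end
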